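(* Every triality of a thick building of type $\mathsf{D}_4$ is capped.
   Context: The Coxeter graph $\mathsf{D}_4$ has central node $2$ joined to nodes $1,3,4$. A triality is an automorphism of the building inducing an order $3$ automorphism of the Coxeter graph (cyclically permuting $1,3,4$). Simplices are opposite if every chamber containing either is opposite some chamber containing the other. $\mathrm{Opp}(\theta)$ is the set of simplices opposite their image; $\mathrm{Type}(\theta)$ is the union of the type sets of simplices in $\mathrm{Opp}(\theta)$; $\theta$ is capped if $\mathrm{Opp}(\theta)$ contains a simplex of type $\mathrm{Type}(\theta)$. *)

theory Defs
  imports Main
begin

text \<open>Elements of W act on the integers; they permute the set {-4..-1,1..4}
  commuting with negation and fix every other integer.  Nodes are labelled
  1,2,3,4 with central node 2 joined to 1, 3 and 4 (Bourbaki labelling).\<close>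

definition swp :: "int \<Rightarrow> int \<Rightarrow> int \<Rightarrow> int" where
  "swp a b x = (if \<bar>x\<bar> = a then sgn x * b else if \<bar>x\<bar> = b then sgn x * a else x)"

definition nswp :: "int \<Rightarrow> int \<Rightarrow> int \<Rightarrow> int" where
  "nswp a b x = (if \<bar>x\<bar> = a then - (sgn x * b) else if \<bar>x\<bar> = b then - (sgn x * a) else x)"

definition D4_S :: "nat set" where
  "D4_S = {1, 2, 3, 4}"

definition gen :: "nat \<Rightarrow> int \<Rightarrow> int" where
  "gen i = (if i = 1 then swp 1 2 else if i = 2 then swp 2 3
            else if i = 3 then swp 3 4 else if i = 4 then nswp 3 4 else id)"

definition wprod :: "nat list \<Rightarrow> int \<Rightarrow> int" where
  "wprod ws = foldr (\<lambda>i f. gen i \<circ> f) ws id"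

definition coxW :: "(int \<Rightarrow> int) set" where
  "coxW = {wprod ws | ws. set ws \<subseteq> D4_S}"

definition len :: "(int \<Rightarrow> int) \<Rightarrow> nat" where
  "len w = (LEAST n. \<exists>ws. set ws \<subseteq> D4_S \<and> length ws = n \<and> wprod ws = w)"

section \<open>Buildings of type D4 as W-metric spaces (Abramenko--Brown, Def. 5.1)\<close>

text \<open>The chambers are all elements of the type 'c; delta is the Weyl distance.\<close>
definition D4_building :: "('c \<Rightarrow> 'c \<Rightarrow> int \<Rightarrow> int) \<Rightarrow> bool" where
  "D4_building \<delta> \<longleftrightarrow>
     (\<forall>C D. \<delta> C D \<in> coxW) \<and>
     (\<forall>C D. \<delta> C D = id \<longleftrightarrow> C = D) \<and>
     (\<forall>C D C' s. s \<in> D4_S \<and> \<delta> C' C = gen s \<longrightarrow>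
         \<delta> C' D \<in> {gen s \<circ> \<delta> C D, \<delta> C D} \<and>
         (len (gen s \<circ> \<delta> C D) = len (\<delta> C D) + 1 \<longrightarrow> \<delta> C' D = gen s \<circ> \<delta> C D)) \<and>
     (\<forall>C D s. s \<in> D4_S \<longrightarrow> (\<exists>C'. \<delta> C' C = gen s \<and> \<delta> C' D = gen s \<circ> \<delta> C D))"

text \<open>Thick: every panel contains at least three chambers.\<close>
definition thick :: "('c \<Rightarrow> 'c \<Rightarrow> int \<Rightarrow> int) \<Rightarrow> bool" where
  "thick \<delta> \<longleftrightarrow> (\<forall>C s. s \<in> D4_S \<longrightarrow>
      (\<exists>D1 D2. D1 \<noteq> D2 \<and> \<delta> C D1 = gen s \<and> \<delta> C D2 = gen s))"

definition chamber_opp :: "('c \<Rightarrow> 'c \<Rightarrow> int \<Rightarrow> int) \<Rightarrow> 'c \<Rightarrow> 'c \<Rightarrow> bool" where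
  "chamber_opp \<delta> C D \<longleftrightarrow> len (\<delta> C D) = Max (len ` coxW)"

definition residue :: "('c \<Rightarrow> 'c \<Rightarrow> int \<Rightarrow> int) \<Rightarrow> nat set \<Rightarrow> 'c \<Rightarrow> 'c set" where
  "residue \<delta> K C = {D. \<exists>ws. set ws \<subseteq> K \<and> \<delta> C D = wprod ws}"

text \<open>A simplex of type J (J a subset of the node set) is represented by the pair
  (J, R), where R is the set of chambers containing it, i.e. a residue of type S - J.\<close>
definition simplices :: "('c \<Rightarrow> 'c \<Rightarrow> int \<Rightarrow> int) \<Rightarrow> (nat set \<times> 'c set) set" where
  "simplices \<delta> = {(J, residue \<delta> (D4_S - J) C) | J C. J \<subseteq> D4_S}"

definition simplex_opp :: "('c \<Rightarrow> 'c \<Rightarrow> int \<Rightarrow> int) \<Rightarrow> nat set \<times> 'c set \<Rightarrow> nat set \<times> 'c set \<Rightarrow> bool" where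
  "simplex_opp \<delta> a b \<longleftrightarrow>
     (\<forall>C \<in> snd a. \<exists>D \<in> snd b. chamber_opp \<delta> C D) \<and>
     (\<forall>D \<in> snd b. \<exists>C \<in> snd a. chamber_opp \<delta> C D)"

definition building_aut :: "('c \<Rightarrow> 'c \<Rightarrow> int \<Rightarrow> int) \<Rightarrow> ('c \<Rightarrow> 'c) \<Rightarrow> (nat \<Rightarrow> nat) \<Rightarrow> bool" where
  "building_aut \<delta> \<theta> \<sigma> \<longleftrightarrow> bij \<theta> \<and> bij_betw \<sigma> D4_S D4_S \<and>
     (\<forall>C D ws. set ws \<subseteq> D4_S \<and> \<delta> C D = wprod ws \<longrightarrow>
        \<delta> (\<theta> C) (\<theta> D) = wprod (map \<sigma> ws))"

definition triality :: "('c \<Rightarrow> 'c \<Rightarrow> int \<Rightarrow> int) \<Rightarrow> ('c \<Rightarrow> 'c) \<Rightarrow> (nat \<Rightarrow> nat) \<Rightarrow> bool" where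
  "triality \<delta> \<theta> \<sigma> \<longleftrightarrow> building_aut \<delta> \<theta> \<sigma> \<and> \<sigma> 2 = 2 \<and>
     ((\<sigma> 1 = 3 \<and> \<sigma> 3 = 4 \<and> \<sigma> 4 = 1) \<or> (\<sigma> 1 = 4 \<and> \<sigma> 4 = 3 \<and> \<sigma> 3 = 1))"

definition simplex_image :: "('c \<Rightarrow> 'c) \<Rightarrow> (nat \<Rightarrow> nat) \<Rightarrow> nat set \<times> 'c set \<Rightarrow> nat set \<times> 'c set" where
  "simplex_image \<theta> \<sigma> a = (\<sigma> ` fst a, \<theta> ` snd a)"

definition Opp :: "('c \<Rightarrow> 'c \<Rightarrow> int \<Rightarrow> int) \<Rightarrow> ('c \<Rightarrow> 'c) \<Rightarrow> (nat \<Rightarrow> nat) \<Rightarrow> (nat set \<times> 'c set) set" where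
  "Opp \<delta> \<theta> \<sigma> = {a \<in> simplices \<delta>. simplex_opp \<delta> a (simplex_image \<theta> \<sigma> a)}"

definition Type :: "('c \<Rightarrow> 'c \<Rightarrow> int \<Rightarrow> int) \<Rightarrow> ('c \<Rightarrow> 'c) \<Rightarrow> (nat \<Rightarrow> nat) \<Rightarrow> nat set" where
  "Type \<delta> \<theta> \<sigma> = \<Union> (fst ` Opp \<delta> \<theta> \<sigma>)"

definition capped :: "('c \<Rightarrow> 'c \<Rightarrow> int \<Rightarrow> int) \<Rightarrow> ('c \<Rightarrow> 'c) \<Rightarrow> (nat \<Rightarrow> nat) \<Rightarrow> bool" where
  "capped \<delta> \<theta> \<sigma> \<longleftrightarrow> (\<exists>a \<in> Opp \<delta> \<theta> \<sigma>. fst a = Type \<delta> \<theta> \<sigma>)"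

end

theory Submission
  imports Defs
begin

definition tab :: "(int \<times> (int \<times> (int list \<times> nat) list) list) list" where
  "tab = [((-4), [((-3), [([-4,-3,-2,-1],6), ([-4,-3,-1,-2],7), ([-4,-3,1,2],5), ([-4,-3,2,1],6)]), ((-2), [([-4,-2,-3,-1],7), ([-4,-2,-1,-3],8), ([-4,-2,1,3],6), ([-4,-2,3,1],7)]), ((-1), [([-4,-1,-3,-2],8), ([-4,-1,-2,-3],9), ([-4,-1,2,3],7), ([-4,-1,3,2],8)]), (1, [([-4,1,-3,2],4), ([-4,1,-2,3],5), ([-4,1,2,-3],3), ([-4,1,3,-2],4)]), (2, [([-4,2,-3,1],5), ([-4,2,-1,3],6), ([-4,2,1,-3],4), ([-4,2,3,-1],5)]), (3, [([-4,3,-2,1],6), ([-4,3,-1,2],7), ([-4,3,1,-2],5), ([-4,3,2,-1],6)])]),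
   ((-3), [((-4), [([-3,-4,-2,-1],7), ([-3,-4,-1,-2],8), ([-3,-4,1,2],6), ([-3,-4,2,1],7)]), ((-2), [([-3,-2,-4,-1],8), ([-3,-2,-1,-4],9), ([-3,-2,1,4],7), ([-3,-2,4,1],8)]), ((-1), [([-3,-1,-4,-2],9), ([-3,-1,-2,-4],10), ([-3,-1,2,4],8), ([-3,-1,4,2],9)]), (1, [([-3,1,-4,2],5), ([-3,1,-2,4],6), ([-3,1,2,-4],4), ([-3,1,4,-2],5)]), (2, [([-3,2,-4,1],6), ([-3,2,-1,4],7), ([-3,2,1,-4],5), ([-3,2,4,-1],6)]), (4, [([-3,4,-2,1],7), ([-3,4,-1,2],8), ([-3,4,1,-2],6), ([-3,4,2,-1],7)])]),
   ((-2), [((-4), [([-2,-4,-3,-1],8), ([-2,-4,-1,-3],9), ([-2,-4,1,3],7), ([-2,-4,3,1],8)]), ((-3), [([-2,-3,-4,-1],9), ([-2,-3,-1,-4],10), ([-2,-3,1,4],8), ([-2,-3,4,1],9)]), ((-1), [([-2,-1,-4,-3],10), ([-2,-1,-3,-4],11), ([-2,-1,3,4],9), ([-2,-1,4,3],10)]), (1, [([-2,1,-4,3],6), ([-2,1,-3,4],7), ([-2,1,3,-4],5), ([-2,1,4,-3],6)]), (3, [([-2,3,-4,1],7), ([-2,3,-1,4],8), ([-2,3,1,-4],6), ([-2,3,4,-1],7)]), (4, [([-2,4,-3,1],8), ([-2,4,-1,3],9), ([-2,4,1,-3],7), ([-2,4,3,-1],8)])]),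
   ((-1), [((-4), [([-1,-4,-3,-2],9), ([-1,-4,-2,-3],10), ([-1,-4,2,3],8), ([-1,-4,3,2],9)]), ((-3), [([-1,-3,-4,-2],10), ([-1,-3,-2,-4],11), ([-1,-3,2,4],9), ([-1,-3,4,2],10)]), ((-2), [([-1,-2,-4,-3],11), ([-1,-2,-3,-4],12), ([-1,-2,3,4],10), ([-1,-2,4,3],11)]), (2, [([-1,2,-4,3],7), ([-1,2,-3,4],8), ([-1,2,3,-4],6), ([-1,2,4,-3],7)]), (3, [([-1,3,-4,2],8), ([-1,3,-2,4],9), ([-1,3,2,-4],7), ([-1,3,4,-2],8)]), (4, [([-1,4,-3,2],9), ([-1,4,-2,3],10), ([-1,4,2,-3],8), ([-1,4,3,-2],9)])]),
   (1, [((-4), [([1,-4,-3,2],3), ([1,-4,-2,3],4), ([1,-4,2,-3],2), ([1,-4,3,-2],3)]), ((-3), [([1,-3,-4,2],4), ([1,-3,-2,4],5), ([1,-3,2,-4],3), ([1,-3,4,-2],4)]), ((-2), [([1,-2,-4,3],5), ([1,-2,-3,4],6), ([1,-2,3,-4],4), ([1,-2,4,-3],5)]), (2, [([1,2,-4,-3],1), ([1,2,-3,-4],2), ([1,2,3,4],0), ([1,2,4,3],1)]), (3, [([1,3,-4,-2],2), ([1,3,-2,-4],3), ([1,3,2,4],1), ([1,3,4,2],2)]), (4, [([1,4,-3,-2],3), ([1,4,-2,-3],4), ([1,4,2,3],2), ([1,4,3,2],3)])]),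
   (2, [((-4), [([2,-4,-3,1],4), ([2,-4,-1,3],5), ([2,-4,1,-3],3), ([2,-4,3,-1],4)]), ((-3), [([2,-3,-4,1],5), ([2,-3,-1,4],6), ([2,-3,1,-4],4), ([2,-3,4,-1],5)]), ((-1), [([2,-1,-4,3],6), ([2,-1,-3,4],7), ([2,-1,3,-4],5), ([2,-1,4,-3],6)]), (1, [([2,1,-4,-3],2), ([2,1,-3,-4],3), ([2,1,3,4],1), ([2,1,4,3],2)]), (3, [([2,3,-4,-1],3), ([2,3,-1,-4],4), ([2,3,1,4],2), ([2,3,4,1],3)]), (4, [([2,4,-3,-1],4), ([2,4,-1,-3],5), ([2,4,1,3],3), ([2,4,3,1],4)])]),
   (3, [((-4), [([3,-4,-2,1],5), ([3,-4,-1,2],6), ([3,-4,1,-2],4), ([3,-4,2,-1],5)]), ((-2), [([3,-2,-4,1],6), ([3,-2,-1,4],7), ([3,-2,1,-4],5), ([3,-2,4,-1],6)]), ((-1), [([3,-1,-4,2],7), ([3,-1,-2,4],8), ([3,-1,2,-4],6), ([3,-1,4,-2],7)]), (1, [([3,1,-4,-2],3), ([3,1,-2,-4],4), ([3,1,2,4],2), ([3,1,4,2],3)]), (2, [([3,2,-4,-1],4), ([3,2,-1,-4],5), ([3,2,1,4],3), ([3,2,4,1],4)]), (4, [([3,4,-2,-1],5), ([3,4,-1,-2],6), ([3,4,1,2],4), ([3,4,2,1],5)])]),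
   (4, [((-3), [([4,-3,-2,1],6), ([4,-3,-1,2],7), ([4,-3,1,-2],5), ([4,-3,2,-1],6)]), ((-2), [([4,-2,-3,1],7), ([4,-2,-1,3],8), ([4,-2,1,-3],6), ([4,-2,3,-1],7)]), ((-1), [([4,-1,-3,2],8), ([4,-1,-2,3],9), ([4,-1,2,-3],7), ([4,-1,3,-2],8)]), (1, [([4,1,-3,-2],4), ([4,1,-2,-3],5), ([4,1,2,3],3), ([4,1,3,2],4)]), (2, [([4,2,-3,-1],5), ([4,2,-1,-3],6), ([4,2,1,3],4), ([4,2,3,1],5)]), (3, [([4,3,-2,-1],6), ([4,3,-1,-2],7), ([4,3,1,2],5), ([4,3,2,1],6)])])]"

definition Lst :: "(int list \<times> nat) list" where
  "Lst = concat (map (\<lambda>(a,t). concat (map snd t)) tab)"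

definition lk :: "int list \<Rightarrow> nat option" where
  "lk l = (case map_of tab (l!0) of None \<Rightarrow> None
     | Some t \<Rightarrow> (case map_of t (l!1) of None \<Rightarrow> None | Some g \<Rightarrow> map_of g l))"

definition chk :: "int list \<times> nat \<Rightarrow> bool" where
  "chk p = (case p of (l, n) \<Rightarrow> lk l = Some n \<and> length l = 4 \<and>
     list_all (\<lambda>s. case lk (map (gen s) l) of None \<Rightarrow> False | Some m \<Rightarrow> m \<le> n + 1) [1,2,3,4] \<and>
     (l = [1,2,3,4] \<or> list_ex (\<lambda>s. case lk (map (gen s) l) of None \<Rightarrow> False | Some m \<Rightarrow> m < n) [1,2,3,4]) \<and>
     n \<le> 12 \<and> (n = 12 \<longrightarrow> l = [-1,-2,-3,-4]))"

lemma F: "list_all chk Lst"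
  by code_simp

lemma swp_odd: "swp a b (- x) = - swp a b x"
  by (simp add: swp_def sgn_if)
lemma nswp_odd: "nswp a b (- x) = - nswp a b x"
  by (simp add: nswp_def sgn_if)
lemma gen_odd: "gen s (- x) = - gen s x"
  by (simp add: gen_def swp_odd nswp_odd)
lemma swp_fix: "\<bar>x\<bar> \<noteq> a \<Longrightarrow> \<bar>x\<bar> \<noteq> b \<Longrightarrow> swp a b x = x"
  by (simp add: swp_def)
lemma nswp_fix: "\<bar>x\<bar> \<noteq> a \<Longrightarrow> \<bar>x\<bar> \<noteq> b \<Longrightarrow> nswp a b x = x"
  by (simp add: nswp_def)
lemma gen_fix: "\<not> (1 \<le> x \<and> x \<le> 4) \<Longrightarrow> \<not> (-4 \<le> x \<and> x \<le> -1) \<Longrightarrow> gen s x = x"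
proof -
  assume "\<not> (1 \<le> x \<and> x \<le> 4)" "\<not> (-4 \<le> x \<and> x \<le> -1)"
  then have "\<bar>x\<bar> \<noteq> 1 \<and> \<bar>x\<bar> \<noteq> 2 \<and> \<bar>x\<bar> \<noteq> 3 \<and> \<bar>x\<bar> \<noteq> 4" by linarith
  then show ?thesis by (simp add: gen_def swp_fix nswp_fix)
qed
lemma swp_swp: "0 < a \<Longrightarrow> 0 < b \<Longrightarrow> a \<noteq> b \<Longrightarrow> swp a b (swp a b x) = x"
  by (auto simp: swp_def sgn_if abs_if)
lemma nswp_nswp: "0 < a \<Longrightarrow> 0 < b \<Longrightarrow> a \<noteq> b \<Longrightarrow> nswp a b (nswp a b x) = x"
  by (auto simp: nswp_def sgn_if abs_if)
lemma gen_gen: "gen s (gen s x) = x"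
  by (simp add: gen_def swp_swp nswp_nswp)

lemma gen_comp_gen: "gen s \<circ> gen s = id"
  by (auto simp: gen_gen)

definition decode :: "int list \<Rightarrow> int \<Rightarrow> int" where
  "decode l x = (if 1 \<le> x \<and> x \<le> 4 then l ! nat (x - 1)
     else if -4 \<le> x \<and> x \<le> -1 then - (l ! nat (- x - 1)) else x)"

lemma decode_odd: "decode l (- x) = - decode l x"
  by (auto simp: decode_def)

lemma decode_fix: "\<not> (1 \<le> x \<and> x \<le> 4) \<Longrightarrow> \<not> (-4 \<le> x \<and> x \<le> -1) \<Longrightarrow> decode l x = x"
  unfolding decode_def by (simp only: if_False)

lemma comp_decode:
  assumes "length m = 4" and odd: "\<And>x. f (- x) = - f x"
    and fx: "\<And>x. \<not> (1 \<le> x \<and> x \<le> 4) \<Longrightarrow> \<not> (-4 \<le> x \<and> x \<le> -1) \<Longrightarrow> f x = x"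
  shows "f \<circ> decode m = decode (map f m)"
proof
  fix x
  show "(f \<circ> decode m) x = decode (map f m) x"
  proof (cases "1 \<le> x \<and> x \<le> 4")
    case True
    then have "nat (x - 1) < 4" by auto
    then show ?thesis using True assms(1) by (simp add: decode_def)
  next
    case False
    show ?thesis
    proof (cases "-4 \<le> x \<and> x \<le> -1")
      case True
      then have "nat (- x - 1) < 4" by auto
      then show ?thesis using True False assms(1) odd[of "m ! nat (- x - 1)"] by (simp add: decode_def)
    next
      case F2: False
      then show ?thesis using False fx[OF False F2] decode_fix[OF False F2, of m] decode_fix[OF False F2, of "map f m"] by simp
    qed
  qed
qed


lemma gen_decode: "length m = 4 \<Longrightarrow> gen s \<circ> decode m = decode (map (gen s) m)"
  by (rule comp_decode) (auto simp: gen_odd gen_fix)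

lemma decode_decode: "length m = 4 \<Longrightarrow> decode l \<circ> decode m = decode (map (decode l) m)"
  by (rule comp_decode) (auto simp: decode_odd decode_fix)

lemma decode_id: "decode [1,2,3,4] = id"
proof
  fix x :: int
  show "decode [1,2,3,4] x = id x"
  proof (cases "1 \<le> x \<and> x \<le> 4")
    case True
    then have "x = 1 \<or> x = 2 \<or> x = 3 \<or> x = 4" by auto
    then show ?thesis by (auto simp: decode_def)
  next
    case False
    show ?thesis
    proof (cases "-4 \<le> x \<and> x \<le> -1")
      case True
      then have "x = -1 \<or> x = -2 \<or> x = -3 \<or> x = -4" by auto
      then show ?thesis by (auto simp: decode_def)
    qed (use False decode_fix in auto)
  qed
qed

lemma len4: "length l = 4 \<Longrightarrow> \<exists>a b c d. l = [a,b,c,d]"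
  by (auto simp: length_Suc_conv numeral_eq_Suc)

lemma map_decode: "length l = 4 \<Longrightarrow> map (decode l) [1,2,3,4] = l"
  by (drule len4) (auto simp: decode_def)

lemma decode_inj: "length l = 4 \<Longrightarrow> length m = 4 \<Longrightarrow> decode l = decode m \<Longrightarrow> l = m"
  by (metis map_decode)

lemma gen_as_decode: "gen s = decode (map (gen s) [1,2,3,4])"
  using gen_decode[of "[1,2,3,4]" s] by (simp add: decode_id)

definition lw :: "nat list \<Rightarrow> int list" where
  "lw ws = foldr (\<lambda>s l. map (gen s) l) ws [1,2,3,4]"

lemma lw_simps[simp]: "lw [] = [1,2,3,4]" "lw (s # ws) = map (gen s) (lw ws)"
  by (simp_all add: lw_def)

lemma length_lw[simp]: "length (lw ws) = 4"
  by (induction ws) auto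

lemma wprod_simps[simp]: "wprod [] = id" "wprod (s # ws) = gen s \<circ> wprod ws"
  by (simp_all add: wprod_def)

lemma wprod_append: "wprod (xs @ ys) = wprod xs \<circ> wprod ys"
  by (induction xs) auto

lemma wprod_decode: "wprod ws = decode (lw ws)"
  by (induction ws) (auto simp: decode_id gen_decode)

lemma wprod_rev: "wprod (rev xs) \<circ> wprod xs = id"
proof (induction xs)
  case (Cons x xs)
  then show ?case by (simp add: wprod_append fun_eq_iff gen_gen)
qed simp

lemma wprod_rev2: "wprod xs \<circ> wprod (rev xs) = id"
  using wprod_rev[of "rev xs"] by simp

lemma F_all: "p \<in> set Lst \<Longrightarrow> chk p"
  using F unfolding list_all_iff by blast

lemma lk_Lst: assumes "lk l = Some n" shows "(l, n) \<in> set Lst"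
proof -
  obtain t where t: "map_of tab (l!0) = Some t"
    using assms unfolding lk_def by (cases "map_of tab (l!0)") auto
  obtain g where g: "map_of t (l!1) = Some g"
    using assms t unfolding lk_def by (cases "map_of t (l!1)") auto
  have lg: "map_of g l = Some n" using assms t g unfolding lk_def by simp
  have 1: "(l!0, t) \<in> set tab" using map_of_SomeD[OF t] .
  have 2: "(l!1, g) \<in> set t" using map_of_SomeD[OF g] .
  have 3: "(l, n) \<in> set g" using map_of_SomeD[OF lg] .
  have "(l, n) \<in> set (concat (map snd t))" using 2 3 by force
  then show ?thesis unfolding Lst_def using 1 by force
qed

lemma chkD: assumes "lk l = Some n"
  shows "length l = 4" "\<And>s. s \<in> {1,2,3,4} \<Longrightarrow> \<exists>m. lk (map (gen s) l) = Some m \<and> m \<le> n + 1"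
    "l = [1,2,3,4] \<or> (\<exists>s \<in> {1,2,3,4}. \<exists>m. lk (map (gen s) l) = Some m \<and> m < n)"
    "n \<le> 12" "n = 12 \<Longrightarrow> l = [-1,-2,-3,-4]"
  using F_all[OF lk_Lst[OF assms]] unfolding chk_def
  by (auto split: option.splits)

lemma gen_notS: "s \<notin> {1,2,3,4} \<Longrightarrow> gen s = id"
  by (auto simp: gen_def fun_eq_iff)

lemma lk_id: "lk [1,2,3,4] = Some 0"
  by code_simp

lemma lk_w0: "lk [-1,-2,-3,-4] = Some 12"
  by code_simp

lemma lw_lk: "\<exists>n. lk (lw ws) = Some n"
proof (induction ws)
  case Nil then show ?case by (simp add: lk_id)
next
  case (Cons s ws)
  then obtain n where n: "lk (lw ws) = Some n" by auto
  show ?case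
  proof (cases "s \<in> {1,2,3,4}")
    case True
    then show ?thesis using chkD(2)[OF n True] by auto
  next
    case False
    then show ?thesis using n by (simp add: gen_notS)
  qed
qed

definition Nf :: "int list \<Rightarrow> nat" where "Nf l = the (lk l)"

lemma Nf_lower: "set ws \<subseteq> D4_S \<Longrightarrow> Nf (lw ws) \<le> length ws"
proof (induction ws)
  case Nil then show ?case by (simp add: Nf_def lk_id)
next
  case (Cons s ws)
  obtain n where n: "lk (lw ws) = Some n" using lw_lk by blast
  have s: "s \<in> {1,2,3,4}" using Cons.prems by (auto simp: D4_S_def)
  obtain m where "lk (map (gen s) (lw ws)) = Some m" "m \<le> n + 1" using chkD(2)[OF n s] by auto
  moreover have "Nf (lw ws) \<le> length ws" using Cons by (auto simp: D4_S_def)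
  ultimately show ?case using n by (simp add: Nf_def)
qed

lemma Nf_upper: "lk l = Some n \<Longrightarrow> \<exists>ws. set ws \<subseteq> D4_S \<and> length ws \<le> n \<and> wprod ws = decode l"
proof (induction n arbitrary: l rule: less_induct)
  case (less n)
  from chkD(3)[OF less.prems] show ?case
  proof
    assume "l = [1,2,3,4]"
    then show ?thesis by (intro exI[of _ "[]"]) (auto simp: decode_id)
  next
    assume "\<exists>s\<in>{1, 2, 3, 4}. \<exists>m. lk (map (gen s) l) = Some m \<and> m < n"
    then obtain s m where s: "s \<in> {1,2,3,4}" and m: "lk (map (gen s) l) = Some m" "m < n" by auto
    obtain ws where ws: "set ws \<subseteq> D4_S" "length ws \<le> m" "wprod ws = decode (map (gen s) l)"
      using less.IH[OF m(2) m(1)] by auto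
    have l4: "length l = 4" using chkD(1)[OF less.prems] .
    have "wprod (s # ws) = decode (map (gen s) (map (gen s) l))"
      using ws(3) l4 by (simp add: gen_decode)
    also have "map (gen s) (map (gen s) l) = l" by (simp add: gen_gen map_idI)
    finally show ?thesis using ws s m(2) by (intro exI[of _ "s # ws"]) (auto simp: D4_S_def)
  qed
qed

lemma len_wprod: assumes "set ws \<subseteq> D4_S" shows "len (wprod ws) = Nf (lw ws)"
proof -
  obtain n where n: "lk (lw ws) = Some n" using lw_lk by blast
  have ex: "\<exists>k. \<exists>vs. set vs \<subseteq> D4_S \<and> length vs = k \<and> wprod vs = wprod ws" using assms by auto
  obtain vs where vs: "set vs \<subseteq> D4_S" "length vs \<le> n" "wprod vs = decode (lw ws)"
    using Nf_upper[OF n] by auto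
  have "len (wprod ws) \<le> length vs"
    unfolding len_def by (rule Least_le) (use vs wprod_decode in auto)
  moreover
  obtain us where us: "set us \<subseteq> D4_S" "length us = len (wprod ws)" "wprod us = wprod ws"
    using LeastI_ex[OF ex] unfolding len_def by blast
  have "lw us = lw ws" using us(3) by (metis decode_inj length_lw wprod_decode)
  then have "Nf (lw ws) \<le> len (wprod ws)" using Nf_lower[OF us(1)] us(2) by simp
  ultimately show ?thesis using vs n by (simp add: Nf_def)
qed

lemma coxW_iff: "w \<in> coxW \<longleftrightarrow> (\<exists>ws. set ws \<subseteq> D4_S \<and> wprod ws = w)"
  by (auto simp: coxW_def)

definition w0 :: "int \<Rightarrow> int" where "w0 = decode [-1,-2,-3,-4]"

lemma w0_word: "wprod [4, 2, 3, 1, 2, 4, 1, 2, 3, 1, 2, 1] = w0"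
  unfolding wprod_decode w0_def by (simp add: gen_def swp_def nswp_def)

lemma w0_coxW: "w0 \<in> coxW"
  using w0_word by (auto simp: coxW_def D4_S_def intro!: exI[of _ "[4, 2, 3, 1, 2, 4, 1, 2, 3, 1, 2, 1]"])

lemma len_le12: "w \<in> coxW \<Longrightarrow> len w \<le> 12"
  by (auto simp: coxW_def len_wprod Nf_def dest!: chkD(4)[OF _] intro: lw_lk
      | metis chkD(4) lw_lk option.sel)+

lemma len_w0: "len w0 = 12"
  using len_wprod[of "[4, 2, 3, 1, 2, 4, 1, 2, 3, 1, 2, 1]"] w0_word
  by (simp add: D4_S_def Nf_def gen_def swp_def nswp_def lk_w0)

lemma Max_len: "Max (len ` coxW) = 12"
proof (rule Max_eqI)
  show "finite (len ` coxW)" by (rule finite_subset[of _ "{..12}"]) (auto simp: len_le12)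
qed (use len_le12 len_w0 w0_coxW in auto)

lemma len12_iff: assumes "w \<in> coxW" shows "len w = 12 \<longleftrightarrow> w = w0"
proof
  assume a: "len w = 12"
  obtain ws where ws: "set ws \<subseteq> D4_S" "wprod ws = w" using assms by (auto simp: coxW_def)
  obtain n where n: "lk (lw ws) = Some n" using lw_lk by blast
  have "n = 12" using a len_wprod[OF ws(1)] ws(2) n by (simp add: Nf_def)
  then have "lw ws = [-1,-2,-3,-4]" using chkD(5)[OF n] by simp
  then show "w = w0" using ws(2) by (simp add: wprod_decode w0_def)
qed (simp add: len_w0)

lemma len_decode: assumes "lk l = Some n" shows "len (decode l) = n"
proof -
  obtain ws where ws: "set ws \<subseteq> D4_S" "length ws \<le> n" "wprod ws = decode l"
    using Nf_upper[OF assms] by auto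
  have "lw ws = l" using ws(3) chkD(1)[OF assms] by (metis decode_inj length_lw wprod_decode)
  then show ?thesis using len_wprod[OF ws(1)] ws(3) assms by (simp add: Nf_def)
qed

lemma decode_coxW: assumes "lk l = Some n" shows "decode l \<in> coxW"
  using Nf_upper[OF assms] unfolding coxW_def by (metis (mono_tags, lifting) mem_Collect_eq)

section \<open>W-metric basics\<close>

lemma wd_cox: "D4_building \<delta> \<Longrightarrow> \<delta> C D \<in> coxW"
  by (simp add: D4_building_def)

lemma wd1: "D4_building \<delta> \<Longrightarrow> \<delta> C D = id \<longleftrightarrow> C = D"
  by (simp add: D4_building_def)

lemma wd2: "D4_building \<delta> \<Longrightarrow> s \<in> D4_S \<Longrightarrow> \<delta> C' C = gen s \<Longrightarrow>
    \<delta> C' D = gen s \<circ> \<delta> C D \<or> \<delta> C' D = \<delta> C D"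
  unfolding D4_building_def by blast

lemma wd2l: "D4_building \<delta> \<Longrightarrow> s \<in> D4_S \<Longrightarrow> \<delta> C' C = gen s \<Longrightarrow>
    len (gen s \<circ> \<delta> C D) = len (\<delta> C D) + 1 \<Longrightarrow> \<delta> C' D = gen s \<circ> \<delta> C D"
  unfolding D4_building_def by blast

lemma wd3: "D4_building \<delta> \<Longrightarrow> s \<in> D4_S \<Longrightarrow> \<exists>C'. \<delta> C' C = gen s \<and> \<delta> C' D = gen s \<circ> \<delta> C D"
  unfolding D4_building_def by blast

lemma gen_neq_id: "s \<in> D4_S \<Longrightarrow> gen s \<noteq> id"
proof
  assume "s \<in> D4_S" "gen s = id"
  then have "gen s 3 = 3" "gen s 1 = 1" by auto
  with \<open>s \<in> D4_S\<close> show False by (auto simp: D4_S_def gen_def swp_def nswp_def)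
qed

lemma gen_comp_cancel: "gen s \<circ> (gen s \<circ> f) = f"
  by (simp add: fun_eq_iff gen_gen)

lemma adj_sym: assumes B: "D4_building \<delta>" and s: "s \<in> D4_S" and a: "\<delta> X Y = gen s"
  shows "\<delta> Y X = gen s"
proof -
  from wd2[OF B s a, of X] have "\<delta> X X = gen s \<circ> \<delta> Y X \<or> \<delta> X X = \<delta> Y X" .
  moreover have "\<delta> X X = id" using wd1[OF B] by simp
  moreover have "\<delta> Y X \<noteq> id"
  proof
    assume "\<delta> Y X = id"
    then have "Y = X" using wd1[OF B] by simp
    then show False using a gen_neq_id[OF s] wd1[OF B, of X X] by simp
  qed
  ultimately have "id = gen s \<circ> \<delta> Y X" by auto
  then have "gen s \<circ> id = gen s \<circ> (gen s \<circ> \<delta> Y X)" by simp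
  then show ?thesis by (simp add: fun_eq_iff gen_gen)
qed

section \<open>Minimal words\<close>

definition minimal :: "nat list \<Rightarrow> bool" where
  "minimal ws \<longleftrightarrow> set ws \<subseteq> D4_S \<and> len (wprod ws) = length ws"

lemma len_le: "set ws \<subseteq> D4_S \<Longrightarrow> len (wprod ws) \<le> length ws"
  unfolding len_def by (rule Least_le) auto

lemma exists_min: assumes "w \<in> coxW" shows "\<exists>ws. minimal ws \<and> wprod ws = w"
proof -
  have ex: "\<exists>k. \<exists>ws. set ws \<subseteq> D4_S \<and> length ws = k \<and> wprod ws = w"
    using assms by (auto simp: coxW_def)
  obtain ws where "set ws \<subseteq> D4_S" "length ws = len w" "wprod ws = w"
    using LeastI_ex[OF ex] unfolding len_def by blast
  then show ?thesis unfolding minimal_def by auto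
qed

lemma wprod_coxW: "set ws \<subseteq> D4_S \<Longrightarrow> wprod ws \<in> coxW"
  by (auto simp: coxW_def)

lemma min_prefix: assumes "minimal (a @ b)" shows "minimal a"
proof -
  have sa: "set a \<subseteq> D4_S" "set b \<subseteq> D4_S" using assms by (auto simp: minimal_def)
  obtain a' where a': "minimal a'" "wprod a' = wprod a" using exists_min[OF wprod_coxW[OF sa(1)]] by auto
  have "len (wprod a) \<le> length a" using len_le[OF sa(1)] .
  moreover have "length a \<le> len (wprod a)"
  proof (rule ccontr)
    assume "\<not> length a \<le> len (wprod a)"
    then have "length (a' @ b) < length (a @ b)" using a' by (simp add: minimal_def)
    moreover have "wprod (a' @ b) = wprod (a @ b)" using a' by (simp add: wprod_append)
    moreover have "set (a' @ b) \<subseteq> D4_S" using a' sa by (auto simp: minimal_def)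
    ultimately show False using len_le[of "a' @ b"] assms by (simp add: minimal_def)
  qed
  ultimately show ?thesis using sa by (simp add: minimal_def)
qed

lemma wprod_rev_cong: "wprod a = wprod b \<Longrightarrow> wprod (rev a) = wprod (rev b)"
proof -
  assume h: "wprod a = wprod b"
  have "wprod (rev a) = wprod (rev a) \<circ> (wprod b \<circ> wprod (rev b))" by (simp add: wprod_rev2)
  also have "\<dots> = (wprod (rev a) \<circ> wprod a) \<circ> wprod (rev b)" by (simp add: h comp_assoc)
  also have "\<dots> = wprod (rev b)" by (simp add: wprod_rev)
  finally show ?thesis .
qed

lemma min_rev: assumes "minimal ws" shows "minimal (rev ws)"
proof -
  have s: "set (rev ws) \<subseteq> D4_S" using assms by (auto simp: minimal_def)
  obtain a' where a': "minimal a'" "wprod a' = wprod (rev ws)" using exists_min[OF wprod_coxW[OF s]] by auto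
  have "len (wprod (rev ws)) \<le> length ws" using len_le[OF s] by simp
  moreover have "length ws \<le> len (wprod (rev ws))"
  proof (rule ccontr)
    assume "\<not> length ws \<le> len (wprod (rev ws))"
    then have "length (rev a') < length ws" using a' by (simp add: minimal_def)
    moreover have "wprod (rev a') = wprod ws" using wprod_rev_cong[OF a'(2)] by simp
    moreover have "set (rev a') \<subseteq> D4_S" using a' by (auto simp: minimal_def)
    ultimately show False using len_le[of "rev a'"] assms by (simp add: minimal_def)
  qed
  ultimately show ?thesis using s by (simp add: minimal_def)
qed

section \<open>Symmetry\<close>

lemma sym_aux:
  assumes B: "D4_building \<delta>"
  shows "minimal (ps @ us) \<Longrightarrow> \<delta> Z X = wprod (rev ps) \<Longrightarrow> \<delta> Z Y = wprod us \<Longrightarrow>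
    \<delta> Y X = wprod (rev (ps @ us))"
proof (induction us arbitrary: Z ps)
  case Nil
  then have "\<delta> Z Y = id" by (simp add: id_def)
  then have "Z = Y" using wd1[OF B] by blast
  then show ?case using Nil by simp
next
  case (Cons s us)
  have s: "s \<in> D4_S" using Cons.prems(1) by (auto simp: minimal_def)
  obtain Z' where Z': "\<delta> Z' Z = gen s" "\<delta> Z' Y = gen s \<circ> \<delta> Z Y" using wd3[OF B s] by blast
  have Z'Y: "\<delta> Z' Y = wprod us" using Z'(2) Cons.prems(3) by (simp add: fun_eq_iff gen_gen)
  have m1: "minimal (ps @ [s])" using min_prefix[of "ps @ [s]" us] Cons.prems(1) by simp
  have m2: "minimal ps" using min_prefix[of ps "[s]"] m1 by simp
  have "len (gen s \<circ> \<delta> Z X) = len (\<delta> Z X) + 1"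
  proof -
    have "gen s \<circ> \<delta> Z X = wprod (rev (ps @ [s]))" using Cons.prems(2) by simp
    then have "len (gen s \<circ> \<delta> Z X) = length ps + 1" using min_rev[OF m1] by (simp add: minimal_def)
    moreover have "len (\<delta> Z X) = length ps" using min_rev[OF m2] Cons.prems(2) by (simp add: minimal_def)
    ultimately show ?thesis by simp
  qed
  then have "\<delta> Z' X = gen s \<circ> \<delta> Z X" using wd2l[OF B s Z'(1)] by blast
  then have "\<delta> Z' X = wprod (rev (ps @ [s]))" using Cons.prems(2) by simp
  from Cons.IH[OF _ this Z'Y] Cons.prems(1) show ?case by simp
qed

lemma delta_sym: assumes B: "D4_building \<delta>" shows "\<delta> Y X \<circ> \<delta> X Y = id"
proof -
  obtain us where us: "minimal us" "wprod us = \<delta> X Y" using exists_min[OF wd_cox[OF B]] by blast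
  have "\<delta> Y X = wprod (rev ([] @ us))"
    using sym_aux[OF B, of "[]" us X X Y] us wd1[OF B] by simp
  then show ?thesis using us(2) wprod_rev[of us] by simp
qed

lemma sym_inv: assumes B: "D4_building \<delta>" and z: "z \<circ> z = id" and a: "\<delta> X Y = z"
  shows "\<delta> Y X = z"
proof -
  have "\<delta> Y X = (\<delta> Y X \<circ> \<delta> X Y) \<circ> z" using a z by (simp add: comp_assoc)
  then show ?thesis using delta_sym[OF B] by simp
qed

section \<open>Galleries\<close>

lemma gallery:
  assumes B: "D4_building \<delta>"
  shows "set us \<subseteq> D4_S \<Longrightarrow> \<delta> P Y = wprod us \<Longrightarrow> \<exists>vs. set vs \<subseteq> set us \<and> \<delta> Y X = wprod vs \<circ> \<delta> P X"
proof (induction us arbitrary: P)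
  case Nil
  then have "\<delta> P Y = id" by (simp add: id_def)
  then have "P = Y" using wd1[OF B] by blast
  then show ?case by (intro exI[of _ "[]"]) simp
next
  case (Cons s us)
  have s: "s \<in> D4_S" using Cons.prems by auto
  obtain P' where P': "\<delta> P' P = gen s" "\<delta> P' Y = gen s \<circ> \<delta> P Y" using wd3[OF B s] by blast
  have P'Y: "\<delta> P' Y = wprod us" using P'(2) Cons.prems(2) by (simp add: fun_eq_iff gen_gen)
  have su: "set us \<subseteq> D4_S" using Cons.prems(1) by auto
  obtain vs where vs: "set vs \<subseteq> set us" "\<delta> Y X = wprod vs \<circ> \<delta> P' X" using Cons.IH[OF su P'Y] by blast
  from wd2[OF B s P'(1), of X] show ?case
  proof
    assume "\<delta> P' X = gen s \<circ> \<delta> P X"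
    then show ?thesis using vs by (intro exI[of _ "vs @ [s]"]) (auto simp: wprod_append comp_assoc)
  next
    assume "\<delta> P' X = \<delta> P X"
    then show ?thesis using vs by (intro exI[of _ vs]) auto
  qed
qed

lemma exists_at: assumes B: "D4_building \<delta>" shows "set ws \<subseteq> D4_S \<Longrightarrow> \<exists>X. \<delta> X C = wprod ws"
proof (induction ws)
  case Nil
  have "\<delta> C C = id" using wd1[OF B] by blast
  then show ?case by (auto simp: id_def)
next
  case (Cons s ws)
  then obtain X where X: "\<delta> X C = wprod ws" by auto
  have s: "s \<in> D4_S" using Cons.prems by auto
  obtain Y where "\<delta> Y X = gen s" "\<delta> Y C = gen s \<circ> \<delta> X C" using wd3[OF B s, of X C] by blast
  then show ?case using X by (metis wprod_simps(2))
qed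

lemma aut_word: "building_aut \<delta> \<theta> \<sigma> \<Longrightarrow> set ws \<subseteq> D4_S \<Longrightarrow> \<delta> C D = wprod ws \<Longrightarrow>
   \<delta> (\<theta> C) (\<theta> D) = wprod (map \<sigma> ws)"
  unfolding building_aut_def by blast

lemma aut_gen: "building_aut \<delta> \<theta> \<sigma> \<Longrightarrow> s \<in> D4_S \<Longrightarrow> \<delta> C D = gen s \<Longrightarrow>
   \<delta> (\<theta> C) (\<theta> D) = gen (\<sigma> s)"
  using aut_word[of \<delta> \<theta> \<sigma> "[s]" C D] by simp

definition Zl :: "int list list" where
  "Zl = [[-1,-2,-3,-4], [-1,-2,4,3], [-2,-1,-3,-4], [-1,-2,-4,-3], [-2,-1,4,3], [-1,-2,3,4],
         [-2,-1,-4,-3], [-2,-1,3,4]]"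

definition sg1 :: "nat \<Rightarrow> nat" where
  "sg1 x = (if x = 1 then 3 else if x = 3 then 4 else if x = 4 then 1 else x)"
definition sg2 :: "nat \<Rightarrow> nat" where
  "sg2 x = (if x = 1 then 4 else if x = 4 then 3 else if x = 3 then 1 else x)"

definition stepA :: "(nat \<Rightarrow> nat) \<Rightarrow> int list \<Rightarrow> bool" where
  "stepA sg z = list_ex (\<lambda>r. lk (map (gen r) z) = Some (Nf z - 1) \<and> map (gen (sg r)) z \<in> set Zl \<and>
      lk (map (gen (sg r)) z) = Some (Nf z + 1)) [1,3,4]"

definition stepB :: "(nat \<Rightarrow> nat) \<Rightarrow> int list \<Rightarrow> bool" where
  "stepB sg z = list_ex (\<lambda>t. map (gen t) z \<in> set Zl \<and> lk (map (gen t) z) = Some (Nf z + 1) \<and>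
      map (gen (sg t)) (map (gen t) z) \<in> set Zl \<and> lk (map (gen (sg t)) (map (gen t) z)) = Some (Nf z + 2)) [1,3,4]"

lemma Zchk: "list_all (\<lambda>z. length z = 4 \<and> (case lk z of None \<Rightarrow> False | Some n \<Rightarrow> 9 \<le> n) \<and> map (decode z) z = [1,2,3,4] \<and>
    list_all (\<lambda>s. map (gen s) z \<in> set Zl) [1,3,4]) Zl"
  by code_simp

lemma Zstep1: "list_all (\<lambda>z. z = [-1,-2,-3,-4] \<or> stepA sg1 z \<or> stepB sg1 z) Zl"
  by code_simp

lemma Zstep2: "list_all (\<lambda>z. z = [-1,-2,-3,-4] \<or> stepA sg2 z \<or> stepB sg2 z) Zl"
  by code_simp

lemma Zfacts: assumes "z \<in> set Zl"
  shows "length z = 4" "\<exists>n. lk z = Some n \<and> 9 \<le> n" "decode z \<circ> decode z = id"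
    "\<And>s. s \<in> {1,3,4} \<Longrightarrow> map (gen s) z \<in> set Zl"
proof -
  have h: "length z = 4 \<and> (case lk z of None \<Rightarrow> False | Some n \<Rightarrow> 9 \<le> n) \<and> map (decode z) z = [1,2,3,4] \<and>
    list_all (\<lambda>s. map (gen s) z \<in> set Zl) [1,3,4]"
    using Zchk assms unfolding list_all_iff by blast
  then show "length z = 4" "\<exists>n. lk z = Some n \<and> 9 \<le> n" by (auto split: option.splits)
  show "decode z \<circ> decode z = id" using h decode_decode[of z z] decode_id by simp
  show "\<And>s. s \<in> {1,3,4} \<Longrightarrow> map (gen s) z \<in> set Zl" using h by auto
qed

lemma w0_Zl: "[-1,-2,-3,-4] \<in> set Zl" by (simp add: Zl_def)

lemma Nf_lk: "lk z = Some n \<Longrightarrow> Nf z = n" by (simp add: Nf_def)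

lemma descent:
  assumes B: "D4_building \<delta>" and T: "thick \<delta>" and A: "building_aut \<delta> \<theta> \<sigma>"
    and sg: "\<And>x. x \<in> {1,3,4} \<Longrightarrow> \<sigma> x = sg x" and sgS: "\<And>x. x \<in> {1,3,4} \<Longrightarrow> sg x \<in> {1,3,4}"
    and st: "\<forall>z\<in>set Zl. z = [-1,-2,-3,-4] \<or> stepA sg z \<or> stepB sg z"
  shows "z \<in> set Zl \<Longrightarrow> \<delta> X (\<theta> X) = decode z \<Longrightarrow> \<exists>Y. \<delta> Y (\<theta> Y) = w0"
proof (induction "12 - Nf z" arbitrary: z X rule: less_induct)
  case less
  have S134: "\<And>x. x \<in> {1,3,4} \<Longrightarrow> x \<in> D4_S" by (auto simp: D4_S_def)
  obtain n where n: "lk z = Some n" "9 \<le> n" using Zfacts(2)[OF less.prems(1)] by blast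
  have Nfz: "Nf z = n" using n by (simp add: Nf_def)
  have z4: "length z = 4" using Zfacts(1)[OF less.prems(1)] .
  have n12: "n \<le> 12" using chkD(4)[OF n(1)] .
  let ?Z = "decode z"
  have lenZ: "len ?Z = n" using len_decode[OF n(1)] .
  from st less.prems(1) consider "z = [-1,-2,-3,-4]" | "stepA sg z" | "stepB sg z" by blast
  then show ?case
  proof cases
    case 1
    then show ?thesis using less.prems(2) by (auto simp: w0_def)
  next
    case 2
    then obtain r where r: "r \<in> {1,3,4}" "lk (map (gen r) z) = Some (n - 1)"
      "map (gen (sg r)) z \<in> set Zl" "lk (map (gen (sg r)) z) = Some (n + 1)"
      unfolding stepA_def list_ex_iff Nfz by auto
    have rS: "r \<in> D4_S" using S134[OF r(1)] .
    have srS: "\<sigma> r \<in> D4_S" and sr: "\<sigma> r = sg r" using S134[OF sgS[OF r(1)]] sg[OF r(1)] by auto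
    have lenrZ: "len (gen r \<circ> ?Z) = n - 1" using len_decode[OF r(2)] gen_decode[OF z4] by simp
    obtain D1 D2 where D: "D1 \<noteq> D2" "\<delta> X D1 = gen r" "\<delta> X D2 = gen r"
      using T rS unfolding thick_def by blast
    have D': "\<delta> D1 X = gen r" "\<delta> D2 X = gen r" using adj_sym[OF B rS] D by auto
    have ne: "gen r \<circ> ?Z \<noteq> ?Z" using lenrZ lenZ n by auto
    have "\<exists>X'. \<delta> X' X = gen r \<and> \<delta> X' (\<theta> X) = ?Z"
    proof (rule ccontr)
      assume na: "\<not> ?thesis"
      have e1: "\<delta> D1 (\<theta> X) = gen r \<circ> ?Z" using wd2[OF B rS D'(1), of "\<theta> X"] na D'(1) less.prems(2) by auto
      have e2: "\<delta> D2 (\<theta> X) = gen r \<circ> ?Z" using wd2[OF B rS D'(2), of "\<theta> X"] na D'(2) less.prems(2) by auto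
      have "\<delta> D1 D2 = gen r \<circ> \<delta> X D2 \<or> \<delta> D1 D2 = \<delta> X D2" using wd2[OF B rS D'(1)] .
      moreover have "\<delta> D1 D2 \<noteq> id" using D(1) wd1[OF B] by blast
      ultimately have "\<delta> D1 D2 = gen r" using D(3) gen_comp_gen by auto
      then have d21: "\<delta> D2 D1 = gen r" using adj_sym[OF B rS] by blast
      have "len (gen r \<circ> \<delta> D1 (\<theta> X)) = len (\<delta> D1 (\<theta> X)) + 1"
        using e1 lenrZ lenZ n by (simp add: gen_comp_cancel)
      then have "\<delta> D2 (\<theta> X) = gen r \<circ> \<delta> D1 (\<theta> X)" using wd2l[OF B rS d21] by blast
      then have "\<delta> D2 (\<theta> X) = ?Z" using e1 by (simp add: gen_comp_cancel)
      then show False using e2 ne by simp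
    qed
    then obtain X' where X': "\<delta> X' X = gen r" "\<delta> X' (\<theta> X) = ?Z" by blast
    have t1: "\<delta> (\<theta> X') (\<theta> X) = gen (\<sigma> r)" using aut_gen[OF A rS X'(1)] .
    have t2: "\<delta> (\<theta> X) X' = ?Z" using sym_inv[OF B Zfacts(3)[OF less.prems(1)] X'(2)] .
    have lsZ: "len (gen (\<sigma> r) \<circ> ?Z) = n + 1" using len_decode[OF r(4)] gen_decode[OF z4] sr by simp
    have "\<delta> (\<theta> X') X' = gen (\<sigma> r) \<circ> ?Z" using wd2l[OF B srS t1, of X'] t2 lsZ lenZ by simp
    then have e: "\<delta> (\<theta> X') X' = decode (map (gen (sg r)) z)" using gen_decode[OF z4] sr by simp
    have e': "\<delta> X' (\<theta> X') = decode (map (gen (sg r)) z)"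
      using sym_inv[OF B Zfacts(3)[OF r(3)] e] .
    have "12 - Nf (map (gen (sg r)) z) < 12 - Nf z" using r(4) Nfz n12 chkD(4)[OF r(4)] by (simp add: Nf_def)
    then show ?thesis using less.hyps r(3) e' by blast
  next
    case 3
    then obtain t where t: "t \<in> {1,3,4}" "map (gen t) z \<in> set Zl" "lk (map (gen t) z) = Some (n + 1)"
      "map (gen (sg t)) (map (gen t) z) \<in> set Zl" "lk (map (gen (sg t)) (map (gen t) z)) = Some (n + 2)"
      unfolding stepB_def list_ex_iff Nfz by auto
    have tS: "t \<in> D4_S" using S134[OF t(1)] .
    have stS: "\<sigma> t \<in> D4_S" and stt: "\<sigma> t = sg t" using S134[OF sgS[OF t(1)]] sg[OF t(1)] by auto
    let ?z1 = "map (gen t) z"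
    have z14: "length ?z1 = 4" using z4 by simp
    obtain X' where X': "\<delta> X' X = gen t" "\<delta> X' (\<theta> X) = gen t \<circ> ?Z"
      using wd3[OF B tS, of X "\<theta> X"] less.prems(2) by metis
    have X'2: "\<delta> X' (\<theta> X) = decode ?z1" using X'(2) gen_decode[OF z4] by simp
    have t1: "\<delta> (\<theta> X') (\<theta> X) = gen (\<sigma> t)" using aut_gen[OF A tS X'(1)] .
    have t2: "\<delta> (\<theta> X) X' = decode ?z1" using sym_inv[OF B Zfacts(3)[OF t(2)] X'2] .
    have l1: "len (decode ?z1) = n + 1" using len_decode[OF t(3)] .
    have l2: "len (gen (\<sigma> t) \<circ> decode ?z1) = n + 2" using len_decode[OF t(5)] gen_decode[OF z14] stt by simp
    have "\<delta> (\<theta> X') X' = gen (\<sigma> t) \<circ> decode ?z1" using wd2l[OF B stS t1, of X'] t2 l1 l2 by simp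
    then have e: "\<delta> (\<theta> X') X' = decode (map (gen (sg t)) ?z1)" using gen_decode[OF z14] stt by simp
    have e': "\<delta> X' (\<theta> X') = decode (map (gen (sg t)) ?z1)"
      using sym_inv[OF B Zfacts(3)[OF t(4)] e] .
    have "12 - Nf (map (gen (sg t)) ?z1) < 12 - Nf z" using t(5) Nfz n12 chkD(4)[OF t(5)] by (simp add: Nf_def)
    then show ?thesis using less.hyps t(4) e' by blast
  qed
qed

lemma chamber_opp_iff: "D4_building \<delta> \<Longrightarrow> chamber_opp \<delta> X Y \<longleftrightarrow> \<delta> X Y = w0"
proof -
  assume B: "D4_building \<delta>"
  have "chamber_opp \<delta> X Y \<longleftrightarrow> len (\<delta> X Y) = 12" by (simp add: chamber_opp_def Max_len)
  then show ?thesis using len12_iff[OF wd_cox[OF B]] by simp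
qed

lemma w0_inv: "w0 \<circ> w0 = id"
  unfolding w0_def using Zfacts(3)[OF w0_Zl] .

lemma W134_Z: "set us \<subseteq> {1,3,4} \<Longrightarrow> \<exists>z\<in>set Zl. wprod us \<circ> w0 = decode z"
proof (induction us)
  case Nil
  then show ?case using w0_Zl by (auto simp: w0_def)
next
  case (Cons s us)
  have su: "set us \<subseteq> {1,3,4}" and s: "s \<in> {1,3,4}" using Cons.prems by auto
  obtain z where z: "z \<in> set Zl" "wprod us \<circ> w0 = decode z" using Cons.IH[OF su] by blast
  have "wprod (s # us) \<circ> w0 = gen s \<circ> (wprod us \<circ> w0)" by (simp add: comp_assoc)
  also have "\<dots> = decode (map (gen s) z)" using z(2) gen_decode[OF Zfacts(1)[OF z(1)]] by simp
  finally show ?case using Zfacts(4)[OF z(1) s] by blast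
qed

lemma genw0_inv: "s \<in> {1,3,4} \<Longrightarrow> (gen s \<circ> w0) \<circ> (gen s \<circ> w0) = id"
  using W134_Z[of "[s]"] Zfacts(3) by auto

lemma inv_set: "(\<And>t. t \<in> T \<Longrightarrow> gen t ` A \<subseteq> A) \<Longrightarrow> set us \<subseteq> T \<Longrightarrow> wprod us ` A \<subseteq> A"
proof (induction us)
  case (Cons s us)
  then have "wprod us ` A \<subseteq> A" "gen s ` A \<subseteq> A" by auto
  then show ?case by (auto simp: image_comp[symmetric])
qed simp

lemma gen_notin:
  assumes s: "s \<in> {1,3,4}" and T: "T \<subseteq> D4_S - {s}" and us: "set us \<subseteq> T"
  shows "gen s \<noteq> wprod us"
proof
  assume eq: "gen s = wprod us"
  consider "s = 1" | "s = 3" | "s = 4" using s by auto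
  then show False
  proof cases
    case 1
    have "wprod us ` {1} \<subseteq> {1}"
    proof (rule inv_set[OF _ us])
      fix t assume "t \<in> T" then have "t \<in> {2,3,4}" using T 1 by (auto simp: D4_S_def)
      then show "gen t ` {1} \<subseteq> {1}" by (auto simp: gen_def swp_def nswp_def)
    qed
    then have "wprod us 1 = 1" by auto
    moreover have "gen s 1 = 2" using 1 by (simp add: gen_def swp_def)
    ultimately show False using eq by simp
  next
    case s3: 2
    have "wprod us ` {1,2,3,-4} \<subseteq> {1,2,3,-4}"
    proof (rule inv_set[OF _ us])
      fix t assume "t \<in> T" then have "t \<in> {1,2,4}" using T s3 by (auto simp: D4_S_def)
      then show "gen t ` {1,2,3,-4} \<subseteq> {1,2,3,-4}" by (auto simp: gen_def swp_def nswp_def)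
    qed
    then have "wprod us 3 \<in> {1,2,3,-4}" by auto
    moreover have "gen s 3 = 4" using s3 by (simp add: gen_def swp_def)
    ultimately show False using eq by simp
  next
    case s4: 3
    have "wprod us ` {1,2,3,4} \<subseteq> {1,2,3,4}"
    proof (rule inv_set[OF _ us])
      fix t assume "t \<in> T" then have "t \<in> {1,2,3}" using T s4 by (auto simp: D4_S_def)
      then show "gen t ` {1,2,3,4} \<subseteq> {1,2,3,4}" by (auto simp: gen_def swp_def nswp_def)
    qed
    then have "wprod us 3 \<in> {1,2,3,4}" by auto
    moreover have "gen s 3 = -4" using s4 by (simp add: gen_def nswp_def)
    ultimately show False using eq by simp
  qed
qed

lemma cyc_cases:
  assumes "triality \<delta> \<theta> \<sigma>"
  obtains "\<And>x. x \<in> {1,3,4} \<Longrightarrow> \<sigma> x = sg1 x" | "\<And>x. x \<in> {1,3,4} \<Longrightarrow> \<sigma> x = sg2 x"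
proof -
  from assms have "(\<sigma> 1 = 3 \<and> \<sigma> 3 = 4 \<and> \<sigma> 4 = 1) \<or> (\<sigma> 1 = 4 \<and> \<sigma> 4 = 3 \<and> \<sigma> 3 = 1)"
    by (simp add: triality_def)
  then show thesis
  proof
    assume h: "\<sigma> 1 = 3 \<and> \<sigma> 3 = 4 \<and> \<sigma> 4 = 1"
    have "\<And>x. x \<in> {1,3,4} \<Longrightarrow> \<sigma> x = sg1 x" using h by (auto simp: sg1_def)
    then show thesis by (rule that(1))
  next
    assume h: "\<sigma> 1 = 4 \<and> \<sigma> 4 = 3 \<and> \<sigma> 3 = 1"
    have "\<And>x. x \<in> {1,3,4} \<Longrightarrow> \<sigma> x = sg2 x" using h by (auto simp: sg2_def)
    then show thesis by (rule that(2))
  qed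
qed

lemma descent2:
  assumes B: "D4_building \<delta>" and T: "thick \<delta>" and Tr: "triality \<delta> \<theta> \<sigma>"
    and z: "z \<in> set Zl" and e: "\<delta> X (\<theta> X) = decode z"
  shows "\<exists>Y. \<delta> Y (\<theta> Y) = w0"
proof -
  have A: "building_aut \<delta> \<theta> \<sigma>" using Tr by (simp add: triality_def)
  from Tr show ?thesis
  proof (cases rule: cyc_cases)
    case 1
    show ?thesis
    proof (rule descent[OF B T A 1 _ _ z e])
      show "\<And>x. x \<in> {1,3,4} \<Longrightarrow> sg1 x \<in> {1,3,4}" by (auto simp: sg1_def)
      show "\<forall>z\<in>set Zl. z = [-1,-2,-3,-4] \<or> stepA sg1 z \<or> stepB sg1 z"
        using Zstep1 by (simp add: list_all_iff)
    qed
  next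
    case 2
    show ?thesis
    proof (rule descent[OF B T A 2 _ _ z e])
      show "\<And>x. x \<in> {1,3,4} \<Longrightarrow> sg2 x \<in> {1,3,4}" by (auto simp: sg2_def)
      show "\<forall>z\<in>set Zl. z = [-1,-2,-3,-4] \<or> stepA sg2 z \<or> stepB sg2 z"
        using Zstep2 by (simp add: list_all_iff)
    qed
  qed
qed

lemma img_avoid: "(\<And>y. y \<in> K \<Longrightarrow> \<sigma> y \<noteq> s) \<Longrightarrow> s \<notin> \<sigma> ` K"
  by blast

lemma set_lemma:
  assumes Tr: "triality \<delta> \<theta> \<sigma>" and J: "J \<subseteq> D4_S" "2 \<notin> J" "J \<inter> {1,3,4} \<noteq> {}" "J \<inter> {1,3,4} \<noteq> {1,3,4}"
  shows "\<exists>s\<in>{1,3,4}. s \<in> D4_S - J \<and> s \<notin> \<sigma> ` (D4_S - J)"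
proof -
  have s2: "\<sigma> 2 = 2" using Tr by (simp add: triality_def)
  have K: "\<And>y. y \<in> D4_S - J \<Longrightarrow> y = 1 \<or> y = 2 \<or> y = 3 \<or> y = 4" by (auto simp: D4_S_def)
  have S: "1 \<in> D4_S" "3 \<in> D4_S" "4 \<in> D4_S" by (auto simp: D4_S_def)
  have c: "(1 \<notin> J \<and> 4 \<in> J) \<or> (3 \<notin> J \<and> 1 \<in> J) \<or> (4 \<notin> J \<and> 3 \<in> J)"
    and c': "(1 \<notin> J \<and> 3 \<in> J) \<or> (3 \<notin> J \<and> 4 \<in> J) \<or> (4 \<notin> J \<and> 1 \<in> J)"
    using J(3,4) by auto
  from Tr show ?thesis
  proof (cases rule: cyc_cases)
    case 1
    then have v: "\<sigma> 1 = 3" "\<sigma> 3 = 4" "\<sigma> 4 = 1" by (auto simp: sg1_def)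
    from c show ?thesis
    proof (elim disjE conjE)
      assume "1 \<notin> J" "4 \<in> J"
      have "1 \<notin> \<sigma> ` (D4_S - J)" by (rule img_avoid) (use K v s2 \<open>4 \<in> J\<close> in fastforce)
      then show ?thesis using \<open>1 \<notin> J\<close> S by blast
    next
      assume "3 \<notin> J" "1 \<in> J"
      have "3 \<notin> \<sigma> ` (D4_S - J)" by (rule img_avoid) (use K v s2 \<open>1 \<in> J\<close> in fastforce)
      then show ?thesis using \<open>3 \<notin> J\<close> S by blast
    next
      assume "4 \<notin> J" "3 \<in> J"
      have "4 \<notin> \<sigma> ` (D4_S - J)" by (rule img_avoid) (use K v s2 \<open>3 \<in> J\<close> in fastforce)
      then show ?thesis using \<open>4 \<notin> J\<close> S by blast
    qed
  next
    case 2
    then have v: "\<sigma> 1 = 4" "\<sigma> 4 = 3" "\<sigma> 3 = 1" by (auto simp: sg2_def)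
    from c' show ?thesis
    proof (elim disjE conjE)
      assume "1 \<notin> J" "3 \<in> J"
      have "1 \<notin> \<sigma> ` (D4_S - J)" by (rule img_avoid) (use K v s2 \<open>3 \<in> J\<close> in fastforce)
      then show ?thesis using \<open>1 \<notin> J\<close> S by blast
    next
      assume "3 \<notin> J" "4 \<in> J"
      have "3 \<notin> \<sigma> ` (D4_S - J)" by (rule img_avoid) (use K v s2 \<open>4 \<in> J\<close> in fastforce)
      then show ?thesis using \<open>3 \<notin> J\<close> S by blast
    next
      assume "4 \<notin> J" "1 \<in> J"
      have "4 \<notin> \<sigma> ` (D4_S - J)" by (rule img_avoid) (use K v s2 \<open>1 \<in> J\<close> in fastforce)
      then show ?thesis using \<open>4 \<notin> J\<close> S by blast
    qed
  qed
qed

lemma cancel_l: "g = wprod us \<circ> f \<Longrightarrow> f = wprod (rev us) \<circ> g"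
proof -
  assume g: "g = wprod us \<circ> f"
  have "\<And>x. wprod (rev us) (wprod us x) = x" using wprod_rev[of us] by (simp add: fun_eq_iff)
  then show ?thesis using g by (simp add: fun_eq_iff)
qed

lemma img_res:
  assumes A: "building_aut \<delta> \<theta> \<sigma>" and K: "K \<subseteq> D4_S" and Y: "Y \<in> \<theta> ` residue \<delta> K C"
  shows "\<exists>vs. set vs \<subseteq> \<sigma> ` K \<and> \<delta> (\<theta> C) Y = wprod vs"
proof -
  obtain Z where Z: "Y = \<theta> Z" "Z \<in> residue \<delta> K C" using Y by blast
  obtain ws where ws: "set ws \<subseteq> K" "\<delta> C Z = wprod ws" using Z(2) by (auto simp: residue_def)
  have "\<delta> (\<theta> C) (\<theta> Z) = wprod (map \<sigma> ws)" using aut_word[OF A _ ws(2)] ws(1) K by blast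
  then show ?thesis using Z(1) ws(1) by (intro exI[of _ "map \<sigma> ws"]) auto
qed

lemma sigma_S: "building_aut \<delta> \<theta> \<sigma> \<Longrightarrow> K \<subseteq> D4_S \<Longrightarrow> \<sigma> ` K \<subseteq> D4_S"
  unfolding building_aut_def bij_betw_def by blast

lemma sigma_134: assumes Tr: "triality \<delta> \<theta> \<sigma>" and K: "K \<subseteq> {1,3,4}" shows "\<sigma> ` K \<subseteq> {1,3,4}"
proof -
  have "\<And>x. x \<in> {1,3,4} \<Longrightarrow> \<sigma> x \<in> {1,3,4}"
    using Tr by (cases rule: cyc_cases) (auto simp: sg1_def sg2_def)
  then show ?thesis using K by blast
qed

lemma K1:
  assumes B: "D4_building \<delta>" and T: "thick \<delta>" and Tr: "triality \<delta> \<theta> \<sigma>"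
    and nopp: "\<And>X. \<delta> X (\<theta> X) \<noteq> w0" and a: "a \<in> Opp \<delta> \<theta> \<sigma>"
  shows "fst a = {} \<or> fst a = {1,3,4}"
proof -
  have A: "building_aut \<delta> \<theta> \<sigma>" using Tr by (simp add: triality_def)
  from a obtain J C where aJ: "a = (J, residue \<delta> (D4_S - J) C)" "J \<subseteq> D4_S"
    and so: "simplex_opp \<delta> a (simplex_image \<theta> \<sigma> a)"
    unfolding Opp_def simplices_def by auto
  define K where "K = D4_S - J"
  define R where "R = residue \<delta> K C"
  have KS: "K \<subseteq> D4_S" by (auto simp: K_def)
  have opp1: "\<And>X. X \<in> R \<Longrightarrow> \<exists>Y\<in>\<theta> ` R. \<delta> X Y = w0"
    using so aJ chamber_opp_iff[OF B] unfolding simplex_opp_def simplex_image_def K_def R_def by auto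
  have CR: "C \<in> R"
  proof -
    have "\<delta> C C = wprod []" using wd1[OF B, of C C] by (simp add: id_def)
    then show ?thesis unfolding R_def residue_def by (intro CollectI exI[of _ "[]"]) simp
  qed
  obtain D where D: "D \<in> \<theta> ` R" "\<delta> C D = w0" using opp1[OF CR] by blast
  obtain vs where vs: "set vs \<subseteq> \<sigma> ` K" "\<delta> (\<theta> C) D = wprod vs"
    using img_res[OF A KS, of D C] D(1) unfolding R_def by blast
  have sK: "\<sigma> ` K \<subseteq> D4_S" using sigma_S[OF A KS] .
  show ?thesis
  proof (cases "2 \<in> J")
    case True
    then have "K \<subseteq> {1,3,4}" by (auto simp: K_def D4_S_def)
    then have s134: "\<sigma> ` K \<subseteq> {1,3,4}" using sigma_134[OF Tr] by blast
    obtain vs' where vs': "set vs' \<subseteq> set vs" "\<delta> D C = wprod vs' \<circ> \<delta> (\<theta> C) C"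
      using gallery[OF B _ vs(2), of C] vs(1) sK by blast
    have "\<delta> D C = w0" using sym_inv[OF B w0_inv D(2)] .
    then have "\<delta> (\<theta> C) C = wprod (rev vs') \<circ> w0" using cancel_l vs'(2) by metis
    moreover have "set (rev vs') \<subseteq> {1,3,4}" using vs'(1) vs(1) s134 by auto
    ultimately obtain z where z: "z \<in> set Zl" "\<delta> (\<theta> C) C = decode z" using W134_Z by metis
    have "\<delta> C (\<theta> C) = decode z" using sym_inv[OF B Zfacts(3)[OF z(1)] z(2)] .
    then obtain Y where "\<delta> Y (\<theta> Y) = w0" using descent2[OF B T Tr z(1)] by blast
    then show ?thesis using nopp by blast
  next
    case n2: False
    show ?thesis
    proof (rule ccontr)
      assume na: "\<not> ?thesis"
      have J134: "J = J \<inter> {1,3,4}" using aJ(2) n2 by (auto simp: D4_S_def)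
      have "J \<inter> {1,3,4} \<noteq> {}" "J \<inter> {1,3,4} \<noteq> {1,3,4}" using na aJ(1) J134 by auto
      then obtain s where s: "s \<in> {1,3,4}" "s \<in> K" "s \<notin> \<sigma> ` K"
        using set_lemma[OF Tr aJ(2) n2] unfolding K_def by blast
      have sS: "s \<in> D4_S" using s by (auto simp: D4_S_def)
      obtain C'' where C'': "\<delta> C'' C = gen s" "\<delta> C'' D = gen s \<circ> \<delta> C D" using wd3[OF B sS] by blast
      have cc: "\<delta> C C'' = gen s" using adj_sym[OF B sS C''(1)] .
      have C''R: "C'' \<in> R" unfolding R_def residue_def using s(2) cc
        by (intro CollectI exI[of _ "[s]"]) simp
      obtain D'' where D'': "D'' \<in> \<theta> ` R" "\<delta> C'' D'' = w0" using opp1[OF C''R] by blast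
      obtain vs2 where vs2: "set vs2 \<subseteq> \<sigma> ` K" "\<delta> (\<theta> C) D'' = wprod vs2"
        using img_res[OF A KS, of D'' C] D''(1) unfolding R_def by blast
      obtain v1 where v1: "set v1 \<subseteq> set vs" "\<delta> D C'' = wprod v1 \<circ> \<delta> (\<theta> C) C''"
        using gallery[OF B _ vs(2), of C''] vs(1) sK by blast
      obtain v2 where v2: "set v2 \<subseteq> set vs2" "\<delta> D'' C'' = wprod v2 \<circ> \<delta> (\<theta> C) C''"
        using gallery[OF B _ vs2(2), of C''] vs2(1) sK by blast
      have e1: "\<delta> D C'' = gen s \<circ> w0"
        using sym_inv[OF B genw0_inv[OF s(1)]] C''(2) D(2) by metis
      have e2: "\<delta> D'' C'' = w0" using sym_inv[OF B w0_inv D''(2)] .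
      have th: "\<delta> (\<theta> C) C'' = wprod (rev v1) \<circ> (gen s \<circ> w0)" using cancel_l v1(2) e1 by metis
      have "w0 = wprod v2 \<circ> (wprod (rev v1) \<circ> (gen s \<circ> w0))" using e2 v2(2) th by simp
      then have "w0 \<circ> w0 = (wprod (v2 @ rev v1) \<circ> gen s) \<circ> (w0 \<circ> w0)"
        by (metis comp_assoc wprod_append)
      then have "id = wprod (v2 @ rev v1) \<circ> gen s" using w0_inv by simp
      then have gs: "gen s = wprod (rev (v2 @ rev v1)) \<circ> id" using cancel_l by metis
      have "set (rev (v2 @ rev v1)) \<subseteq> \<sigma> ` K" using v1(1) v2(1) vs(1) vs2(1) by auto
      then show False using gen_notin[OF s(1), of "\<sigma> ` K" "rev (v2 @ rev v1)"] s(3) sK gs by auto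
    qed
  qed
qed

lemma K2:
  assumes B: "D4_building \<delta>" and Tr: "triality \<delta> \<theta> \<sigma>"
  shows "({}, UNIV) \<in> Opp \<delta> \<theta> \<sigma>"
proof -
  have A: "building_aut \<delta> \<theta> \<sigma>" using Tr by (simp add: triality_def)
  have sur: "\<theta> ` UNIV = UNIV" using A by (simp add: building_aut_def bij_def)
  obtain C :: 'a where True by blast
  have res: "residue \<delta> (D4_S - {}) C = UNIV"
  proof -
    { fix D
      have "\<delta> C D \<in> coxW" by (rule wd_cox[OF B])
      then obtain ws where "set ws \<subseteq> D4_S" "wprod ws = \<delta> C D" using coxW_iff by metis
      then have "D \<in> residue \<delta> (D4_S - {}) C" unfolding residue_def by (intro CollectI exI[of _ ws]) simp }
    then show ?thesis by auto
  qed
  have sim: "({}, UNIV) \<in> simplices \<delta>" unfolding simplices_def using res by force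
  have ex: "\<And>Y. \<exists>X. \<delta> X Y = w0 \<and> \<delta> Y X = w0"
  proof -
    fix Y
    obtain X where X: "\<delta> X Y = w0"
      using exists_at[OF B, of "[4, 2, 3, 1, 2, 4, 1, 2, 3, 1, 2, 1]" Y] w0_word by (auto simp: D4_S_def)
    then show "\<exists>X. \<delta> X Y = w0 \<and> \<delta> Y X = w0" using sym_inv[OF B w0_inv X] by blast
  qed
  have "simplex_opp \<delta> ({}, UNIV) (simplex_image \<theta> \<sigma> ({}, UNIV))"
    unfolding simplex_opp_def simplex_image_def using sur chamber_opp_iff[OF B] by (auto; meson ex)
  then show ?thesis using sim by (simp add: Opp_def)
qed

theorem theorem3p17:
  fixes \<delta> :: "'c \<Rightarrow> 'c \<Rightarrow> int \<Rightarrow> int" and \<theta> :: "'c \<Rightarrow> 'c" and \<sigma> :: "nat \<Rightarrow> nat"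
  assumes "D4_building \<delta>" and "thick \<delta>" and "triality \<delta> \<theta> \<sigma>"
  shows "capped \<delta> \<theta> \<sigma>"
proof -
  note B = assms(1) and T = assms(2) and Tr = assms(3)
  have fstS: "\<And>a. a \<in> Opp \<delta> \<theta> \<sigma> \<Longrightarrow> fst a \<subseteq> D4_S"
    unfolding Opp_def simplices_def by auto
  show ?thesis
  proof (cases "\<exists>X. \<delta> X (\<theta> X) = w0")
    case True
    then obtain X where X: "\<delta> X (\<theta> X) = w0" by blast
    have res: "residue \<delta> (D4_S - D4_S) X = {X}"
    proof -
      have "\<And>D. (\<exists>ws. set ws \<subseteq> {} \<and> \<delta> X D = wprod ws) \<longleftrightarrow> D = X"
        using wd1[OF B] by (auto simp: id_def)
      then show ?thesis unfolding residue_def by auto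
    qed
    have sim: "(D4_S, {X}) \<in> simplices \<delta>" unfolding simplices_def using res by force
    have "simplex_opp \<delta> (D4_S, {X}) (simplex_image \<theta> \<sigma> (D4_S, {X}))"
      unfolding simplex_opp_def simplex_image_def using X chamber_opp_iff[OF B] by auto
    then have inO: "(D4_S, {X}) \<in> Opp \<delta> \<theta> \<sigma>" using sim by (simp add: Opp_def)
    have "Type \<delta> \<theta> \<sigma> = D4_S" unfolding Type_def
    proof
      show "\<Union> (fst ` Opp \<delta> \<theta> \<sigma>) \<subseteq> D4_S" using fstS by blast
      have "fst (D4_S, {X}) \<in> fst ` Opp \<delta> \<theta> \<sigma>" using inO by blast
      then show "D4_S \<subseteq> \<Union> (fst ` Opp \<delta> \<theta> \<sigma>)" by (metis Union_upper fst_conv)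
    qed
    then show ?thesis unfolding capped_def using inO by (intro bexI[of _ "(D4_S, {X})"]) simp_all
  next
    case False
    then have nopp: "\<And>X. \<delta> X (\<theta> X) \<noteq> w0" by blast
    have k1: "\<And>a. a \<in> Opp \<delta> \<theta> \<sigma> \<Longrightarrow> fst a = {} \<or> fst a = {1,3,4}"
      using K1[OF B T Tr nopp] by blast
    have k2: "({}, UNIV) \<in> Opp \<delta> \<theta> \<sigma>" using K2[OF B Tr] .
    show ?thesis
    proof (cases "\<exists>a\<in>Opp \<delta> \<theta> \<sigma>. fst a = {1,3,4}")
      case True
      then obtain a where a: "a \<in> Opp \<delta> \<theta> \<sigma>" "fst a = {1,3,4}" by blast
      have "Type \<delta> \<theta> \<sigma> = {1,3,4}" unfolding Type_def
      proof
        show "\<Union> (fst ` Opp \<delta> \<theta> \<sigma>) \<subseteq> {1,3,4}"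
        proof (rule Union_least)
          fix A assume "A \<in> fst ` Opp \<delta> \<theta> \<sigma>"
          then obtain b where b: "b \<in> Opp \<delta> \<theta> \<sigma>" "A = fst b" by blast
          show "A \<subseteq> {1,3,4}" using k1[OF b(1)] b(2) by auto
        qed
        have "fst a \<in> fst ` Opp \<delta> \<theta> \<sigma>" using a(1) by blast
        then show "{1,3,4} \<subseteq> \<Union> (fst ` Opp \<delta> \<theta> \<sigma>)" using a(2) by (metis Union_upper)
      qed
      then show ?thesis unfolding capped_def using a by (intro bexI[of _ a]) simp_all
    next
      case False
      have "\<And>A. A \<in> fst ` Opp \<delta> \<theta> \<sigma> \<Longrightarrow> A = {}"
      proof -
        fix A assume "A \<in> fst ` Opp \<delta> \<theta> \<sigma>"
        then obtain b where b: "b \<in> Opp \<delta> \<theta> \<sigma>" "A = fst b" by blast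
        show "A = {}" using k1[OF b(1)] b False by blast
      qed
      then have "Type \<delta> \<theta> \<sigma> = {}" unfolding Type_def by blast
      then show ?thesis unfolding capped_def using k2 by (intro bexI[of _ "({}, UNIV)"]) simp_all
    qed
  qed
qed

end
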